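(* Let $F$ be a distribution function whose tail $\overline F=1-F$ is a normalized regularly varying function of index $-\alpha$, $\alpha>0$. Let $\delta>0$. There exists $t_4$ such that for any $0<u\le v$, any $t\ge t_4$ and any nonnegative integer $k<\alpha$, $$\int_{tv}^\infty x^k\,d\mathsf M_uF(x)\le\frac{2\alpha}{\alpha-k}\,v^k\Bigl(\frac uv\Bigr)^{\alpha-\delta}t^k\,\overline F(t).$$
   Context: For $u>0$, $\mathsf M_uF(x)=F(x/u)$ is the distribution function of $uX$ when $X$ has distribution $F$. A function $g$ on $[a,\infty)$ is normalized regularly varying with index $\rho$ if $g(t)=c\,t^\rho\exp\int_a^t\frac{\epsilon(s)}{s}ds$ with $c>0$ and $\epsilon(s)\to0$ as $s\to\infty$. *)

theory Defs
  imports "HOL-Analysis.Analysis"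
begin

definition distribution_function :: "(real \<Rightarrow> real) \<Rightarrow> bool" where
  "distribution_function F \<longleftrightarrow>
     mono F \<and> (\<forall>x. continuous (at_right x) F) \<and>
     (F \<longlongrightarrow> 0) at_bot \<and> (F \<longlongrightarrow> 1) at_top"

text \<open>Scaling: \<open>M_u F x = F (x/u)\<close>, the distribution function of \<open>uX\<close>.\<close>
definition scaleDF :: "real \<Rightarrow> (real \<Rightarrow> real) \<Rightarrow> real \<Rightarrow> real" where
  "scaleDF u F x = F (x / u)"

definition normalized_RV :: "(real \<Rightarrow> real) \<Rightarrow> real \<Rightarrow> bool" where
  "normalized_RV g \<rho> \<longleftrightarrow>
     (\<exists>a c \<epsilon>. a > 0 \<and> c > 0 \<and> (\<epsilon> \<longlongrightarrow> 0) at_top \<and>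
        (\<forall>t\<ge>a. (\<lambda>s. \<epsilon> s / s) integrable_on {a..t} \<and>
                 g t = c * t powr \<rho> * exp (integral {a..t} (\<lambda>s. \<epsilon> s / s))))"

end

theory Submission
  imports Defs "HOL-Probability.Distribution_Functions"
begin


lemma rv_bound:
  fixes g h :: "real \<Rightarrow> real"
  assumes a: "a > 0" and c: "c > 0"
    and rep: "\<forall>t\<ge>a. h integrable_on {a..t} \<and> g t = c * t powr \<rho> * exp (integral {a..t} h)"
    and hb: "\<forall>s\<ge>T. h s \<le> \<eta> / s" and aT: "a \<le> T" and Tt: "T \<le> t" and tz: "t \<le> z"
  shows "g z \<le> (z/t) powr (\<rho> + \<eta>) * g t"
proof -
  have t0: "t > 0" using a aT Tt by linarith
  have z0: "z > 0" using t0 tz by linarith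
  have intz: "h integrable_on {a..z}" using rep aT Tt tz by auto
  have comb: "integral {a..t} h + integral {t..z} h = integral {a..z} h"
    using Henstock_Kurzweil_Integration.integral_combine[where a=a and c=t and b=z and f=h] aT Tt tz intz by linarith
  have intt: "h integrable_on {t..z}"
    by (rule integrable_subinterval_real[OF intz]) (use aT Tt in auto)
  have hi: "((\<lambda>s. \<eta> / s) has_integral (\<eta> * ln z - \<eta> * ln t)) {t..z}"
  proof (rule fundamental_theorem_of_calculus[OF tz])
    fix x assume "x \<in> {t..z}"
    then have "x > 0" using t0 by auto
    then show "((\<lambda>s. \<eta> * ln s) has_vector_derivative \<eta> / x) (at x within {t..z})"
      by (auto intro!: derivative_eq_intros simp: has_real_derivative_iff_has_vector_derivative[symmetric] field_simps)
  qed
  have J: "integral {t..z} h \<le> \<eta> * ln z - \<eta> * ln t"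
    using has_integral_le[OF integrable_integral[OF intt] hi] hb Tt by auto
  have gz: "g z = c * z powr \<rho> * exp (integral {a..t} h) * exp (integral {t..z} h)"
    using rep aT Tt tz comb[symmetric] by (simp add: exp_add)
  have gt: "g t = c * t powr \<rho> * exp (integral {a..t} h)"
    using rep aT Tt by auto
  have "exp (integral {t..z} h) \<le> exp (\<eta> * ln z - \<eta> * ln t)" using J by simp
  also have "\<dots> = (z/t) powr \<eta>"
    using t0 z0 by (simp add: powr_def ln_div algebra_simps)
  finally have E: "exp (integral {t..z} h) \<le> (z/t) powr \<eta>" .
  have "g z \<le> c * z powr \<rho> * exp (integral {a..t} h) * (z/t) powr \<eta>"
    unfolding gz using E c by (intro mult_left_mono) auto
  also have "z powr \<rho> = (z/t) powr \<rho> * t powr \<rho>"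
    using t0 z0 by (simp add: powr_divide)
  also have "c * ((z/t) powr \<rho> * t powr \<rho>) * exp (integral {a..t} h) * (z/t) powr \<eta>
      = ((z/t) powr \<rho> * (z/t) powr \<eta>) * g t"
    unfolding gt by (simp add: algebra_simps)
  also have "(z/t) powr \<rho> * (z/t) powr \<eta> = (z/t) powr (\<rho> + \<eta>)"
    by (simp add: powr_add)
  finally show ?thesis .
qed



lemma rv_cont:
  fixes g h :: "real \<Rightarrow> real"
  assumes a: "a > 0"
    and rep: "\<forall>t\<ge>a. h integrable_on {a..t} \<and> g t = c * t powr \<rho> * exp (integral {a..t} h)"
    and x: "x > a"
  shows "isCont g x"
proof -
  let ?G = "\<lambda>y. c * y powr \<rho> * exp (integral {a..y} h)"
  have "h integrable_on {a..x+1}" using rep x by auto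
  then have "continuous_on {a..x+1} (\<lambda>y. integral {a..y} h)"
    by (rule indefinite_integral_continuous_1)
  moreover have "x \<in> interior {a..x+1}" using x by auto
  ultimately have ci: "isCont (\<lambda>y. integral {a..y} h) x"
    by (rule continuous_on_interior)
  have "isCont ?G x"
    using x a ci by (auto intro!: continuous_intros)
  moreover have ev: "eventually (\<lambda>y. g y = ?G y) (nhds x)"
  proof -
    have "eventually (\<lambda>y. y \<in> {a<..}) (nhds x)"
      using x by (intro eventually_nhds_in_open) auto
    then show ?thesis by eventually_elim (use rep in auto)
  qed
  ultimately show ?thesis using isCont_cong[OF ev] by simp
qed

lemma scaleDF_props:
  assumes F: "distribution_function F" and u: "u > 0"
  shows "\<And>x y. x \<le> y \<Longrightarrow> scaleDF u F x \<le> scaleDF u F y"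
    and "\<And>x. continuous (at_right x) (scaleDF u F)"
    and "(scaleDF u F \<longlongrightarrow> 0) at_bot"
    and "(scaleDF u F \<longlongrightarrow> 1) at_top"
proof -
  have mF: "mono F" and rc: "\<And>x. continuous (at_right x) F"
    and lb: "(F \<longlongrightarrow> 0) at_bot" and lt: "(F \<longlongrightarrow> 1) at_top"
    using F unfolding distribution_function_def by auto
  show "\<And>x y. x \<le> y \<Longrightarrow> scaleDF u F x \<le> scaleDF u F y"
    unfolding scaleDF_def using u by (auto intro!: monoD[OF mF] divide_right_mono)
  show "continuous (at_right x) (scaleDF u F)" for x
  proof -
    have "filterlim (\<lambda>y. y / u) (at_right (x/u)) (at_right x)"
    proof -
      have "((\<lambda>y. y / u) \<longlongrightarrow> x / u) (at_right x)"
        using u by (intro tendsto_intros) auto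
      moreover have "eventually (\<lambda>y. y / u \<in> {x/u<..} \<and> y / u \<noteq> x / u) (at_right x)"
        using u by (auto simp: eventually_at_right_less divide_strict_right_mono
            intro!: eventually_mono[OF eventually_at_right_less[of x]])
      ultimately show ?thesis by (simp add: filterlim_at)
    qed
    moreover have "(F \<longlongrightarrow> F (x/u)) (at_right (x/u))"
      using rc[of "x/u"] by (simp add: continuous_within)
    ultimately have "((\<lambda>y. F (y/u)) \<longlongrightarrow> F (x/u)) (at_right x)"
      by (rule filterlim_compose[rotated])
    moreover have "scaleDF u F = (\<lambda>y. F (y/u))" by (auto simp: scaleDF_def fun_eq_iff)
    ultimately show ?thesis by (simp add: continuous_within)
  qed
  have fb: "filterlim (\<lambda>y. y / u) at_bot at_bot"
    unfolding filterlim_at_bot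
  proof
    fix Z :: real
    show "eventually (\<lambda>y. y / u \<le> Z) at_bot"
      unfolding eventually_at_bot_linorder
      by (rule exI[of _ "Z*u"]) (use u in \<open>auto simp: field_simps\<close>)
  qed
  have ft: "filterlim (\<lambda>y. y / u) at_top at_top"
    unfolding filterlim_at_top
  proof
    fix Z :: real
    show "eventually (\<lambda>y. y / u \<ge> Z) at_top"
      unfolding eventually_at_top_linorder
      by (rule exI[of _ "Z*u"]) (use u in \<open>auto simp: field_simps\<close>)
  qed
  show "(scaleDF u F \<longlongrightarrow> 0) at_bot"
    unfolding scaleDF_def using filterlim_compose[OF lb fb] by simp
  show "(scaleDF u F \<longlongrightarrow> 1) at_top"
    unfolding scaleDF_def using filterlim_compose[OF lt ft] by simp
qed

lemma tail_measure:
  assumes F: "distribution_function F" and u: "u > 0" and c: "isCont F (y/u)"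
  shows "emeasure (interval_measure (scaleDF u F)) {y..} = ennreal (1 - F (y/u))"
proof -
  let ?M = "interval_measure (scaleDF u F)"
  note P = scaleDF_props[OF F u]
  interpret real_distribution ?M
    by (rule real_distribution_interval_measure[OF P])
  have cdf: "cdf ?M = scaleDF u F"
    by (rule cdf_interval_measure[OF P(1,2,3)])
  have "isCont (scaleDF u F) y"
  proof -
    have "isCont (\<lambda>z. z / u) y" using u by (intro continuous_intros) auto
    then have "isCont (\<lambda>z. F (z / u)) y" using c by (rule isCont_o2)
    then show ?thesis unfolding scaleDF_def .
  qed
  then have m0: "measure ?M {y} = 0" using isCont_cdf cdf by metis
  have "measure ?M {..y} = measure ?M ({..<y} \<union> {y})" by (metis ivl_disj_un_singleton(2))
  also have "\<dots> = measure ?M {..<y} + measure ?M {y}"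
    by (rule finite_measure_Union) auto
  moreover have "scaleDF u F y = measure ?M {..y}" using cdf by (metis cdf_def)
  ultimately have "measure ?M {..<y} = scaleDF u F y" using m0 by linarith
  moreover have "measure ?M {y..} = 1 - measure ?M {..<y}"
    using prob_compl[of "{..<y}"] by (auto simp: Compl_eq_Diff_UNIV[symmetric] not_less)
  ultimately have "measure ?M {y..} = 1 - F (y/u)" by (simp add: scaleDF_def)
  then show ?thesis by (simp add: emeasure_eq_measure)
qed



lemma power_integral_tail:
  fixes s \<beta> e :: real
  assumes s: "s > 0" and e: "e < -1"
  shows "(\<integral>\<^sup>+y. ennreal (y powr e) * indicator {s..} y \<partial>lborel) = ennreal (- (s powr (e+1) / (e+1)))"
proof -
  have "(\<integral>\<^sup>+y. ennreal (y powr e) * indicator {s..} y \<partial>lborel) = ennreal (0 - s powr (e+1) / (e+1))"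
  proof (rule nn_integral_FTC_atLeast)
    show "(\<lambda>y. y powr e) \<in> borel_measurable borel" by measurable
    show "DERIV (\<lambda>y. y powr (e+1) / (e+1)) x :> x powr e" if "s \<le> x" for x
    proof -
      have x: "x > 0" using that s by linarith
      have "DERIV (\<lambda>y. y powr (e+1) / (e+1)) x :> ((e+1) * x powr (e+1 - 1)) / (e+1)"
        using x by (auto intro!: derivative_eq_intros)
      then show ?thesis using e by simp
    qed
    show "0 \<le> x powr e" for x by simp
    show "((\<lambda>y. y powr (e+1) / (e+1)) \<longlongrightarrow> 0) at_top"
    proof -
      have "((\<lambda>y. y powr (e+1)) \<longlongrightarrow> 0) at_top"
        using e by (intro tendsto_neg_powr filterlim_ident) auto
      then show ?thesis using tendsto_divide_zero by blast
    qed
  qed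
  then show ?thesis by simp
qed



lemma main_integral:
  fixes G :: "real \<Rightarrow> real" and s \<beta> C :: real and k :: nat
  assumes RD: "real_distribution (interval_measure G)"
    and s: "s > 0" and kb: "real k < \<beta>" and C: "C \<ge> 0"
    and tail: "\<And>y. y \<ge> s \<Longrightarrow> emeasure (interval_measure G) {y..} \<le> ennreal ((s/y) powr \<beta> * C)"
  shows "(\<integral>\<^sup>+x\<in>{s..}. ennreal (x ^ k) \<partial>(interval_measure G)) \<le> ennreal (s ^ k * C * \<beta> / (\<beta> - real k))"
proof -
  let ?M = "interval_measure G"
  interpret real_distribution ?M by (rule RD)
  have psf: "pair_sigma_finite ?M lborel"
    unfolding pair_sigma_finite_def
    using sigma_finite_measure_axioms lborel.sigma_finite_measure_axioms by auto
  define f where "f = (\<lambda>x y::real. ennreal (real k * y ^ (k - 1)) * indicator {s..} y * indicator {y..} x)"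
  have [measurable]: "Measurable.pred (borel \<Otimes>\<^sub>M borel) (\<lambda>x::real\<times>real. fst x \<in> {snd x..})"
    unfolding atLeast_iff by measurable
  have fm[measurable]: "case_prod f \<in> borel_measurable (?M \<Otimes>\<^sub>M lborel)"
    unfolding f_def by measurable
  have A: "ennreal (x ^ k) * indicator {s..} x = ennreal (s ^ k) * indicator {s..} x + (\<integral>\<^sup>+y. f x y \<partial>lborel)" for x
  proof (cases "s \<le> x")
    case False
    then have "\<And>y. f x y = 0" unfolding f_def by (auto simp: indicator_def)
    then show ?thesis using False by simp
  next
    case True
    have "(\<integral>\<^sup>+y. f x y \<partial>lborel) = (\<integral>\<^sup>+y. ennreal (real k * y ^ (k - 1)) * indicator {s..x} y \<partial>lborel)"
      unfolding f_def by (intro nn_integral_cong) (auto simp: indicator_def)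
    also have "\<dots> = ennreal (x ^ k - s ^ k)"
    proof (rule nn_integral_FTC_Icc)
      show "(\<lambda>y. real k * y ^ (k - 1)) \<in> borel_measurable borel" by measurable
      show "DERIV (\<lambda>y. y ^ k) y :> real k * y ^ (k - 1)" for y
        by (auto intro!: derivative_eq_intros)
      show "0 \<le> real k * y ^ (k - 1)" if "y \<in> {s..x}" for y using that s by auto
    qed (use True in auto)
    finally have "(\<integral>\<^sup>+y. f x y \<partial>lborel) = ennreal (x ^ k - s ^ k)" .
    moreover have "s ^ k \<le> x ^ k" using True s by (intro power_mono) auto
    ultimately show ?thesis using True s by (simp add: ennreal_plus[symmetric])
  qed
  have "(\<integral>\<^sup>+x\<in>{s..}. ennreal (x ^ k) \<partial>?M)
      = (\<integral>\<^sup>+x. ennreal (s ^ k) * indicator {s..} x + (\<integral>\<^sup>+y. f x y \<partial>lborel) \<partial>?M)"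
    using A by simp
  also have "\<dots> = ennreal (s ^ k) * emeasure ?M {s..} + (\<integral>\<^sup>+x. (\<integral>\<^sup>+y. f x y \<partial>lborel) \<partial>?M)"
    by (subst nn_integral_add) (auto intro!: lborel.borel_measurable_nn_integral[OF fm] simp: nn_integral_cmult_indicator)
  also have "(\<integral>\<^sup>+x. (\<integral>\<^sup>+y. f x y \<partial>lborel) \<partial>?M) = (\<integral>\<^sup>+y. (\<integral>\<^sup>+x. f x y \<partial>?M) \<partial>lborel)"
    by (rule pair_sigma_finite.Fubini'[OF psf fm, symmetric])
  also have "\<dots> \<le> (\<integral>\<^sup>+y. ennreal (real k * C * s powr \<beta>) * (ennreal (y powr (real k - 1 - \<beta>)) * indicator {s..} y) \<partial>lborel)"
  proof (intro nn_integral_mono)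
    fix y :: real
    have "(\<integral>\<^sup>+x. f x y \<partial>?M) = ennreal (real k * y ^ (k - 1)) * indicator {s..} y * emeasure ?M {y..}"
      unfolding f_def by (simp add: nn_integral_cmult_indicator)
    also have "\<dots> \<le> ennreal (real k * C * s powr \<beta>) * (ennreal (y powr (real k - 1 - \<beta>)) * indicator {s..} y)"
    proof (cases "s \<le> y")
      case False then show ?thesis by simp
    next
      case True
      have y: "y > 0" using True s by linarith
      have "ennreal (real k * y ^ (k - 1)) * indicator {s..} y * emeasure ?M {y..}
          \<le> ennreal (real k * y ^ (k - 1)) * ennreal ((s/y) powr \<beta> * C)"
        using True tail[OF True] by (simp add: mult_left_mono)
      also have "\<dots> = ennreal (real k * y ^ (k - 1) * ((s/y) powr \<beta> * C))"
        using y C by (simp add: ennreal_mult)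
      also have "real k * y ^ (k - 1) * ((s/y) powr \<beta> * C) = real k * C * s powr \<beta> * y powr (real k - 1 - \<beta>)"
      proof (cases "k = 0")
        case False
        then have "real (k - 1) = real k - 1" by (simp add: of_nat_diff)
        then have yk: "y ^ (k - 1) = y powr (real k - 1)" using y by (metis powr_realpow)
        have "real k * y ^ (k - 1) * ((s/y) powr \<beta> * C) = real k * C * s powr \<beta> * (y powr (real k - 1) / y powr \<beta>)"
          unfolding yk using y s by (simp add: powr_divide)
        also have "y powr (real k - 1) / y powr \<beta> = y powr (real k - 1 - \<beta>)"
          by (simp add: powr_diff)
        finally show ?thesis .
      qed simp
      also have "ennreal (real k * C * s powr \<beta> * y powr (real k - 1 - \<beta>))
          = ennreal (real k * C * s powr \<beta>) * (ennreal (y powr (real k - 1 - \<beta>)) * indicator {s..} y)"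
        using True C by (simp add: ennreal_mult)
      finally show ?thesis .
    qed
    finally show "(\<integral>\<^sup>+x. f x y \<partial>?M) \<le> ennreal (real k * C * s powr \<beta>) * (ennreal (y powr (real k - 1 - \<beta>)) * indicator {s..} y)" .
  qed
  also have "\<dots> = ennreal (real k * C * s powr \<beta>) * ennreal (- (s powr (real k - 1 - \<beta> + 1) / (real k - 1 - \<beta> + 1)))"
    using kb s by (subst nn_integral_cmult) (auto simp: power_integral_tail)
  also have "\<dots> = ennreal (real k * C * s ^ k / (\<beta> - real k))"
  proof -
    have "s powr \<beta> * s powr (real k - \<beta>) = s ^ k"
      using s by (simp add: powr_add[symmetric] powr_realpow)
    then have "real k * C * s powr \<beta> * (- (s powr (real k - 1 - \<beta> + 1) / (real k - 1 - \<beta> + 1)))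
        = real k * C * s ^ k / (\<beta> - real k)"
      using kb by (simp add: field_simps)
    moreover have "0 \<le> - (s powr (real k - 1 - \<beta> + 1) / (real k - 1 - \<beta> + 1))"
      using kb by (simp add: divide_nonneg_neg)
    moreover have "0 \<le> real k * C * s powr \<beta>" using C by simp
    ultimately show ?thesis by (simp only: ennreal_mult[symmetric])
  qed
  finally have B: "(\<integral>\<^sup>+x\<in>{s..}. ennreal (x ^ k) \<partial>?M) \<le> ennreal (s ^ k) * emeasure ?M {s..} + ennreal (real k * C * s ^ k / (\<beta> - real k))"
    by (simp add: add_left_mono)
  have "emeasure ?M {s..} \<le> ennreal C" using tail[of s] s by simp
  then have "ennreal (s ^ k) * emeasure ?M {s..} \<le> ennreal (s ^ k * C)"
    using s C by (simp add: ennreal_mult mult_left_mono)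
  then have "(\<integral>\<^sup>+x\<in>{s..}. ennreal (x ^ k) \<partial>?M) \<le> ennreal (s ^ k * C) + ennreal (real k * C * s ^ k / (\<beta> - real k))"
    using B by (meson add_right_mono order_trans)
  also have "\<dots> = ennreal (s ^ k * C + real k * C * s ^ k / (\<beta> - real k))"
    using s C kb by (simp add: ennreal_plus)
  also have "s ^ k * C + real k * C * s ^ k / (\<beta> - real k) = s ^ k * C * \<beta> / (\<beta> - real k)"
    using kb by (simp add: field_simps)
  finally show ?thesis .
qed



theorem lemma5p3p3:
  fixes F :: "real \<Rightarrow> real" and \<alpha> \<delta> :: real
  assumes "distribution_function F"
    and "\<alpha> > 0"
    and "normalized_RV (\<lambda>x. 1 - F x) (- \<alpha>)"
    and "\<delta> > 0"
  shows "\<exists>t4::real. \<forall>u v t :: real. \<forall>k :: nat.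
           0 < u \<longrightarrow> u \<le> v \<longrightarrow> t \<ge> t4 \<longrightarrow> real k < \<alpha> \<longrightarrow>
           (\<integral>\<^sup>+ x\<in>{t * v..}. ennreal (x ^ k) \<partial>(interval_measure (scaleDF u F)))
             \<le> ennreal (2 * \<alpha> / (\<alpha> - real k) * v ^ k * (u / v) powr (\<alpha> - \<delta>)
                        * t ^ k * (1 - F t))"
proof -
  note DF = assms(1)
  have al: "\<alpha> > 0" and de: "\<delta> > 0" using assms by auto
  define g where "g = (\<lambda>x. 1 - F x)"
  obtain a c \<epsilon> where a: "a > 0" and c: "c > 0" and eps: "(\<epsilon> \<longlongrightarrow> 0) at_top"
    and rep0: "\<forall>t\<ge>a. (\<lambda>s. \<epsilon> s / s) integrable_on {a..t} \<and>
                 g t = c * t powr (-\<alpha>) * exp (integral {a..t} (\<lambda>s. \<epsilon> s / s))"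
    using assms(3) unfolding normalized_RV_def g_def by blast
  define h where "h = (\<lambda>s. \<epsilon> s / s)"
  have rep: "\<forall>t\<ge>a. h integrable_on {a..t} \<and> g t = c * t powr (-\<alpha>) * exp (integral {a..t} h)"
    using rep0 unfolding h_def by blast
  define d where "d = \<alpha> - (of_int \<lceil>\<alpha>\<rceil> - 1)"
  have d0: "d > 0" unfolding d_def using ceiling_correct[of \<alpha>] by linarith
  have dk: "d \<le> \<alpha> - real k" if "real k < \<alpha>" for k :: nat
  proof -
    have "real k < of_int \<lceil>\<alpha>\<rceil>" using that le_of_int_ceiling[of \<alpha>] by linarith
    then have "int k < \<lceil>\<alpha>\<rceil>" by linarith
    then have "real k \<le> of_int \<lceil>\<alpha>\<rceil> - 1" by linarith
    then show ?thesis unfolding d_def by linarith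
  qed
  define \<eta> where "\<eta> = min \<delta> (d/2)"
  have eta0: "\<eta> > 0" unfolding \<eta>_def using de d0 by auto
  from tendstoD[OF eps eta0] obtain T0 where T0: "\<And>s. s \<ge> T0 \<Longrightarrow> dist (\<epsilon> s) 0 < \<eta>"
    unfolding eventually_at_top_linorder by blast
  define t4 where "t4 = max a T0 + 1"
  have t4a: "a < t4" and t4T: "T0 \<le> t4" unfolding t4_def by auto
  have hb: "\<forall>s\<ge>t4. h s \<le> \<eta> / s"
  proof safe
    fix s assume s: "s \<ge> t4"
    then have "s > 0" "\<epsilon> s \<le> \<eta>" using T0[of s] t4a t4T a by auto
    then show "h s \<le> \<eta> / s" unfolding h_def by (simp add: divide_right_mono)
  qed
  have RV: "g z \<le> (z/t) powr (- \<alpha> + \<eta>) * g t" if "t4 \<le> t" "t \<le> z" for t z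
    by (rule rv_bound[OF a c rep hb]) (use that t4a in auto)
  have F1: "F x \<le> 1" for x
  proof (rule tendsto_lowerbound)
    show "(F \<longlongrightarrow> 1) at_top" using DF unfolding distribution_function_def by auto
    have "mono F" using DF unfolding distribution_function_def by auto
    then show "eventually (\<lambda>y. F x \<le> F y) at_top"
      unfolding eventually_at_top_linorder by (auto intro: monoD)
  qed simp
  then have g0: "g x \<ge> 0" for x unfolding g_def by simp
  have contF: "isCont F x" if "x > a" for x
  proof -
    have "isCont g x" by (rule rv_cont[OF a rep that])
    then have "isCont (\<lambda>x. 1 - g x) x" by (intro continuous_intros)
    then show ?thesis unfolding g_def by simp
  qed
  show ?thesis
  proof (rule exI[of _ t4], intro allI impI)
    fix u v t :: real and k :: nat
    assume u: "0 < u" and uv: "u \<le> v" and t: "t4 \<le> t" and k: "real k < \<alpha>"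
    define s where "s = t * v"
    define \<beta> where "\<beta> = \<alpha> - \<eta>"
    define C where "C = g (s/u)"
    have t0: "t > 0" using t t4a a by linarith
    have v0: "v > 0" using u uv by linarith
    have s0: "s > 0" unfolding s_def using t0 v0 by simp
    have su: "s / u = t * (v / u)" unfolding s_def by simp
    have vu: "v / u \<ge> 1" using u uv by simp
    have tsu: "t \<le> s / u" unfolding su using t0 vu
      by (metis mult_le_cancel_left1 order_less_imp_not_less)
    have kb: "real k < \<beta>" unfolding \<beta>_def \<eta>_def using dk[OF k] d0 by linarith
    have C0: "C \<ge> 0" unfolding C_def by (rule g0)
    have tail: "emeasure (interval_measure (scaleDF u F)) {y..} \<le> ennreal ((s/y) powr \<beta> * C)"
      if y: "y \<ge> s" for y
    proof -
      have yu: "s / u \<le> y / u" using y u by (simp add: divide_right_mono)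
      have y0: "y > 0" using y s0 by linarith
      have "emeasure (interval_measure (scaleDF u F)) {y..} = ennreal (g (y/u))"
        unfolding g_def by (rule tail_measure[OF DF u contF]) (use t4a t tsu yu in linarith)
      also have "g (y/u) \<le> ((y/u)/(s/u)) powr (- \<alpha> + \<eta>) * g (s/u)"
        by (rule RV) (use t tsu yu in linarith)+
      also have "((y/u)/(s/u)) powr (- \<alpha> + \<eta>) = (s/y) powr \<beta>"
      proof -
        have "((y/u)/(s/u)) = y / s" using u by simp
        moreover have "- \<alpha> + \<eta> = - \<beta>" unfolding \<beta>_def by simp
        moreover have "(y/s) powr (- \<beta>) = (s/y) powr \<beta>"
          using y0 s0 by (simp add: powr_minus_divide powr_divide)
        ultimately show ?thesis by metis
      qed
      finally show ?thesis unfolding C_def by (simp add: ennreal_leI)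
    qed
    have RD: "real_distribution (interval_measure (scaleDF u F))"
      by (rule real_distribution_interval_measure[OF scaleDF_props[OF DF u]])
    have "(\<integral>\<^sup>+ x\<in>{s..}. ennreal (x ^ k) \<partial>(interval_measure (scaleDF u F)))
        \<le> ennreal (s ^ k * C * \<beta> / (\<beta> - real k))"
      by (rule main_integral[OF RD s0 kb C0 tail])
    also have "s ^ k * C * \<beta> / (\<beta> - real k)
        \<le> 2 * \<alpha> / (\<alpha> - real k) * v ^ k * (u / v) powr (\<alpha> - \<delta>) * t ^ k * (1 - F t)"
    proof -
      have "C \<le> ((s/u)/t) powr (- \<alpha> + \<eta>) * g t"
        unfolding C_def by (rule RV[OF t tsu])
      also have "((s/u)/t) powr (- \<alpha> + \<eta>) = (u/v) powr \<beta>"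
      proof -
        have "((s/u)/t) = v / u" unfolding s_def using t0 by simp
        moreover have "- \<alpha> + \<eta> = - \<beta>" unfolding \<beta>_def by simp
        moreover have "(v/u) powr (- \<beta>) = (u/v) powr \<beta>"
          using u v0 by (simp add: powr_minus_divide powr_divide)
        ultimately show ?thesis by metis
      qed
      also have "(u/v) powr \<beta> \<le> (u/v) powr (\<alpha> - \<delta>)"
        by (rule powr_mono') (use u v0 uv in \<open>auto simp: \<beta>_def \<eta>_def\<close>)
      finally have CC: "C \<le> (u/v) powr (\<alpha> - \<delta>) * g t"
        using g0[of t] by (simp add: mult_right_mono)
      have bb: "\<beta> / (\<beta> - real k) \<le> 2 * \<alpha> / (\<alpha> - real k)"
      proof -
        have h1: "\<beta> - real k \<ge> (\<alpha> - real k) / 2"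
        proof -
          have "\<eta> \<le> d / 2" unfolding \<eta>_def by simp
          then show ?thesis using dk[OF k] unfolding \<beta>_def by argo
        qed
        have h2: "\<beta> \<le> \<alpha>" unfolding \<beta>_def using eta0 by linarith
        have p: "\<alpha> - real k > 0" using k by linarith
        have b0: "\<beta> > 0" using kb by linarith
        have "\<beta> / (\<beta> - real k) \<le> \<alpha> / ((\<alpha> - real k) / 2)"
          using h1 h2 p b0 by (intro frac_le) auto
        then show ?thesis by (simp add: mult.commute)
      qed
      have "s ^ k * C * \<beta> / (\<beta> - real k) = s ^ k * C * (\<beta> / (\<beta> - real k))" by simp
      also have "\<dots> \<le> s ^ k * ((u/v) powr (\<alpha> - \<delta>) * g t) * (2 * \<alpha> / (\<alpha> - real k))"
        using CC bb s0 C0 kb by (intro mult_mono) auto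
      also have "\<dots> = 2 * \<alpha> / (\<alpha> - real k) * v ^ k * (u / v) powr (\<alpha> - \<delta>) * t ^ k * (1 - F t)"
        unfolding s_def g_def by (simp add: power_mult_distrib mult_ac)
      finally show ?thesis .
    qed
    finally show "(\<integral>\<^sup>+ x\<in>{t * v..}. ennreal (x ^ k) \<partial>(interval_measure (scaleDF u F)))
             \<le> ennreal (2 * \<alpha> / (\<alpha> - real k) * v ^ k * (u / v) powr (\<alpha> - \<delta>)
                        * t ^ k * (1 - F t))"
      unfolding s_def by (simp add: ennreal_leI)
  qed
qed

end
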